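(* A tree has a good subgraph if and only if it has a good subgraph that is a tree (a good subtree).
   Context: Graphs are finite. A leaf is a vertex of degree one. Good subgraph: Let $H$ be a graph, $Q$ a subgraph of $H$ without isolated vertices, and $E_Q^-$ the set of edges of $H$ not in $Q$ incident with at least one vertex of $Q$. $Q$ is a good subgraph of $H$ if there exist a set of edges $E$ with $E_Q^-\subseteq E\subseteq E_H\setminus E_Q$ and an orientation $A_E$ of the edges of $E$ (where $d^+(x)$, $d^-(x)$ denote the numbers of arcs of $A_E$ leaving, resp. entering $x$, and $d_H(x)$ is the degree in $H$) such that the arcs of $A_E$ form a family $\mathcal P=\{P_x: x\in V_Q\}$ of oriented paths indexed by the vertices of $Q$ with: (i) every vertex $v$ of $Q$ is the initial vertex of exactly one path of $\mathcal P$, and $d^+(v)=1$, $d^-(v)=d_H(v)-d_Q(v)-1$; (ii) if $x$ is an inner vertex of a path of $\mathcal P$, then $d^+(x)=1$ and $d^-(x)=d_H(x)-1$; (iii) if $x$ is an end vertex of a path of $\mathcal P$, then $d^-(x)<d_H(x)$. *)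

theory Defs
  imports Main
begin

definition graph :: "'a set \<Rightarrow> 'a set set \<Rightarrow> bool" where
  "graph V E \<longleftrightarrow> finite V \<and> (\<forall>e\<in>E. \<exists>u v. e = {u, v} \<and> u \<noteq> v \<and> u \<in> V \<and> v \<in> V)"

definition degree :: "'a set set \<Rightarrow> 'a \<Rightarrow> nat" where
  "degree E x = card {e \<in> E. x \<in> e}"

definition adj :: "'a set set \<Rightarrow> 'a \<Rightarrow> 'a \<Rightarrow> bool" where
  "adj E u v \<longleftrightarrow> {u, v} \<in> E \<and> u \<noteq> v"

definition connected_graph :: "'a set \<Rightarrow> 'a set set \<Rightarrow> bool" where
  "connected_graph V E \<longleftrightarrow>
     (\<forall>u\<in>V. \<forall>v\<in>V. (u, v) \<in> {(x, y). adj E x y}\<^sup>*)"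

definition is_cycle :: "'a set set \<Rightarrow> 'a list \<Rightarrow> bool" where
  "is_cycle E c \<longleftrightarrow> length c \<ge> 3 \<and> distinct c \<and>
     (\<forall>i. Suc i < length c \<longrightarrow> adj E (c ! i) (c ! Suc i)) \<and> adj E (last c) (hd c)"

definition acyclic_graph :: "'a set set \<Rightarrow> bool" where
  "acyclic_graph E \<longleftrightarrow> \<not> (\<exists>c. is_cycle E c)"

definition tree :: "'a set \<Rightarrow> 'a set set \<Rightarrow> bool" where
  "tree V E \<longleftrightarrow> graph V E \<and> V \<noteq> {} \<and> connected_graph V E \<and> acyclic_graph E"

definition subgraph :: "'a set \<Rightarrow> 'a set set \<Rightarrow> 'a set \<Rightarrow> 'a set set \<Rightarrow> bool" where
  "subgraph VQ EQ V E \<longleftrightarrow> graph VQ EQ \<and> VQ \<subseteq> V \<and> EQ \<subseteq> E"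

definition no_isolated :: "'a set \<Rightarrow> 'a set set \<Rightarrow> bool" where
  "no_isolated VQ EQ \<longleftrightarrow> (\<forall>v\<in>VQ. \<exists>e\<in>EQ. v \<in> e)"

definition boundary_edges :: "'a set set \<Rightarrow> 'a set \<Rightarrow> 'a set set \<Rightarrow> 'a set set" where
  "boundary_edges E VQ EQ = {e \<in> E - EQ. e \<inter> VQ \<noteq> {}}"

definition orientation :: "'a set set \<Rightarrow> ('a \<times> 'a) set \<Rightarrow> bool" where
  "orientation F A \<longleftrightarrow> (\<forall>(u, v)\<in>A. {u, v} \<in> F \<and> (v, u) \<notin> A) \<and>
     (\<forall>e\<in>F. \<exists>(u, v)\<in>A. e = {u, v})"

definition outdeg :: "('a \<times> 'a) set \<Rightarrow> 'a \<Rightarrow> nat" where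
  "outdeg A x = card {y. (x, y) \<in> A}"

definition indeg :: "('a \<times> 'a) set \<Rightarrow> 'a \<Rightarrow> nat" where
  "indeg A x = card {y. (y, x) \<in> A}"

definition path_arcs :: "'a list \<Rightarrow> ('a \<times> 'a) set" where
  "path_arcs p = {(p ! i, p ! Suc i) | i. Suc i < length p}"

definition inner_vertices :: "'a list \<Rightarrow> 'a set" where
  "inner_vertices p = {p ! i | i. 0 < i \<and> Suc i < length p}"

definition good_subgraph :: "'a set \<Rightarrow> 'a set set \<Rightarrow> 'a set \<Rightarrow> 'a set set \<Rightarrow> bool" where
  "good_subgraph V E VQ EQ \<longleftrightarrow>
     subgraph VQ EQ V E \<and> no_isolated VQ EQ \<and> EQ \<noteq> {} \<and>
     (\<exists>F A P.
        boundary_edges E VQ EQ \<subseteq> F \<and> F \<subseteq> E - EQ \<and>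
        orientation F A \<and>
        \<comment> \<open>the arcs of A form a family of oriented paths indexed by V_Q\<close>
        (\<forall>x\<in>VQ. P x \<noteq> [] \<and> distinct (P x)) \<and>
        A = (\<Union>x\<in>VQ. path_arcs (P x)) \<and>
        (\<forall>x\<in>VQ. \<forall>y\<in>VQ. x \<noteq> y \<longrightarrow> path_arcs (P x) \<inter> path_arcs (P y) = {}) \<and>
        \<comment> \<open>(i)\<close>
        (\<forall>v\<in>VQ. (\<exists>!x. x \<in> VQ \<and> hd (P x) = v) \<and> outdeg A v = 1 \<and>
           int (indeg A v) = int (degree E v) - int (degree EQ v) - 1) \<and>
        \<comment> \<open>(ii)\<close>
        (\<forall>x\<in>VQ. \<forall>y\<in>inner_vertices (P x).
           outdeg A y = 1 \<and> int (indeg A y) = int (degree E y) - 1) \<and>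
        \<comment> \<open>(iii)\<close>
        (\<forall>x\<in>VQ. indeg A (last (P x)) < degree E (last (P x))))"

end

theory Submission imports Defs begin

abbreviation reach :: "'a set set \<Rightarrow> ('a \<times> 'a) set" where
  "reach E' \<equiv> {(x, y). adj E' x y}\<^sup>*"

fun walk :: "('a \<Rightarrow> 'a \<Rightarrow> bool) \<Rightarrow> 'a list \<Rightarrow> bool" where
  "walk R [] = False"
| "walk R [x] = True"
| "walk R (x # y # xs) = (R x y \<and> walk R (y # xs))"

lemma walk_snoc: "walk R xs \<Longrightarrow> R (last xs) z \<Longrightarrow> walk R (xs @ [z])"
  by (induction R xs rule: walk.induct) auto

lemma walk_suffix: "walk R (xs @ y # ys) \<Longrightarrow> walk R (y # ys)"
proof (induction xs)
  case (Cons x xs) then show ?case by (cases xs) auto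
qed simp

lemma walk_prefix: "walk R (xs @ y # ys) \<Longrightarrow> walk R (xs @ [y])"
proof (induction xs)
  case Nil then show ?case by simp
next
  case (Cons x xs) then show ?case by (cases xs) auto
qed

lemma walk_join: "walk R (xs @ [y]) \<Longrightarrow> walk R (y # ys) \<Longrightarrow> walk R (xs @ y # ys)"
proof (induction xs)
  case Nil then show ?case by simp
next
  case (Cons x xs) then show ?case by (cases xs) auto
qed

lemma walk_nth: "walk R xs \<Longrightarrow> Suc i < length xs \<Longrightarrow> R (xs ! i) (xs ! Suc i)"
proof (induction R xs arbitrary: i rule: walk.induct)
  case (3 R x y xs) then show ?case by (cases i) auto
qed auto

lemma rtrancl_walk:
  assumes "(x, y) \<in> {(x, y). R x y}\<^sup>*"
  shows "\<exists>xs. walk R xs \<and> hd xs = x \<and> last xs = y"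
  using assms
proof (induction rule: rtrancl_induct)
  case base then show ?case by (intro exI[of _ "[x]"]) simp
next
  case (step y z)
  then obtain xs where "walk R xs" "hd xs = x" "last xs = y" by blast
  moreover have "xs \<noteq> []" using \<open>walk R xs\<close> by auto
  ultimately show ?case using step(2)
    by (intro exI[of _ "xs @ [z]"]) (auto simp: walk_snoc)
qed

lemma walk_distinct:
  "walk R xs \<Longrightarrow> \<exists>ys. walk R ys \<and> distinct ys \<and> hd ys = hd xs \<and> last ys = last xs"
proof (induction "length xs" arbitrary: xs rule: less_induct)
  case less
  show ?case
  proof (cases "distinct xs")
    case True then show ?thesis using less by blast
  next
    case False
    then obtain p q r z where xs: "xs = p @ [z] @ q @ [z] @ r"
      using not_distinct_decomp by blast
    have w1: "walk R (p @ [z])" using less(2) xs walk_prefix[of R p z "q @ z # r"] by simp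
    have w2: "walk R (z # r)" using less(2) xs walk_suffix[of R "p @ z # q" z r] by simp
    have w: "walk R (p @ z # r)" using walk_join[OF w1 w2] .
    have "length (p @ z # r) < length xs" using xs by simp
    then obtain ys where "walk R ys \<and> distinct ys \<and> hd ys = hd (p @ z # r) \<and> last ys = last (p @ z # r)"
      using less(1) w by blast
    moreover have "hd (p @ z # r) = hd xs" using xs by (cases p) auto
    moreover have "last (p @ z # r) = last xs" using xs by (cases r) auto
    ultimately show ?thesis by metis
  qed
qed

lemma adj_sym: "adj E' x y \<Longrightarrow> adj E' y x"
  unfolding adj_def by (metis insert_commute)

lemma reach_sym: "(x, y) \<in> reach E' \<Longrightarrow> (y, x) \<in> reach E'"
proof -
  have "sym {(x, y). adj E' x y}" by (rule symI) (simp add: adj_sym)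
  then have "sym (reach E')" by (rule sym_rtrancl)
  then show "(x, y) \<in> reach E' \<Longrightarrow> (y, x) \<in> reach E'" by (rule symD)
qed

lemma reach_mono: "E1 \<subseteq> E2 \<Longrightarrow> (x, y) \<in> reach E1 \<Longrightarrow> (x, y) \<in> reach E2"
proof -
  assume "E1 \<subseteq> E2"
  then have "{(x, y). adj E1 x y} \<subseteq> {(x, y). adj E2 x y}" by (auto simp: adj_def)
  then show "(x, y) \<in> reach E1 \<Longrightarrow> (x, y) \<in> reach E2" using rtrancl_mono by blast
qed

lemma reach_in: "(x, y) \<in> reach E' \<Longrightarrow> y = x \<or> y \<in> \<Union>E'"
proof (induction rule: rtrancl_induct)
  case (step y z) then show ?case unfolding adj_def by blast
qed simp

lemma path_reach:
  "distinct p \<Longrightarrow> k < length p \<Longrightarrow> (\<forall>j<k. {p ! j, p ! Suc j} \<in> E') \<Longrightarrow> (p ! 0, p ! k) \<in> reach E'"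
proof (induction k)
  case (Suc k)
  then have "(p ! 0, p ! k) \<in> reach E'" by simp
  moreover have "p ! k \<noteq> p ! Suc k" using Suc(2,3) by (simp add: nth_eq_iff_index_eq)
  then have "adj E' (p ! k) (p ! Suc k)" using Suc(4) by (simp add: adj_def)
  ultimately show ?case by (simp add: rtrancl_into_rtrancl)
qed simp

lemma no_bypass:
  assumes ac: "acyclic_graph E" and e: "{a, b} \<in> E" and ab: "a \<noteq> b"
  shows "(b, a) \<notin> reach (E - {{a, b}})"
proof
  assume r: "(b, a) \<in> reach (E - {{a, b}})"
  obtain xs where "walk (adj (E - {{a, b}})) xs" "hd xs = b" "last xs = a"
    using rtrancl_walk[OF r] by blast
  then obtain ys where ys: "walk (adj (E - {{a, b}})) ys" "distinct ys" "hd ys = b" "last ys = a"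
    using walk_distinct by metis
  have ne: "ys \<noteq> []" using ys(1) by auto
  have l3: "length ys \<ge> 3"
  proof (rule ccontr)
    assume "\<not> ?thesis"
    then have "length ys = 1 \<or> length ys = 2" proof -
      have "length ys > 0" using ne by simp
      then show ?thesis using \<open>\<not> 3 \<le> length ys\<close> by linarith
    qed
    then show False
    proof
      assume "length ys = 1"
      then obtain u where "ys = [u]" by (auto simp: length_Suc_conv)
      then show False using ys(3,4) ab by simp
    next
      assume "length ys = 2"
      then obtain u v where uv: "ys = [u, v]" by (auto simp: length_Suc_conv numeral_2_eq_2)
      then have "adj (E - {{a, b}}) b a" using ys(1,3,4) by simp
      then show False unfolding adj_def by (metis Diff_iff insert_commute singletonI)
    qed
  qed
  have c1: "\<forall>i. Suc i < length ys \<longrightarrow> adj E (ys ! i) (ys ! Suc i)"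
  proof (intro allI impI)
    fix i assume "Suc i < length ys"
    then have "adj (E - {{a, b}}) (ys ! i) (ys ! Suc i)" using walk_nth ys(1) by metis
    then show "adj E (ys ! i) (ys ! Suc i)" unfolding adj_def by blast
  qed
  have c2: "adj E (last ys) (hd ys)" using ys(3,4) e ab by (simp add: adj_def)
  have "is_cycle E ys" unfolding is_cycle_def using l3 ys(2) c1 c2 by blast
  then show False using ac unfolding acyclic_graph_def by blast
qed



definition side :: "'a set set \<Rightarrow> 'a \<Rightarrow> 'a \<Rightarrow> 'a set" where
  "side E' b a = {z. (b, z) \<in> reach (E' - {{a, b}})}"

lemma path_arcs_two: "path_arcs [x, y] = {(x, y)}"
  unfolding path_arcs_def by (auto simp: less_Suc_eq)

lemma inner_two: "inner_vertices [x, y] = {}"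
  unfolding inner_vertices_def by auto

locale goodctx =
  fixes V :: "'a set" and E VQ EQ F A P
  assumes tr: "tree V E" and sg: "subgraph VQ EQ V E" and ni: "no_isolated VQ EQ"
    and ne: "EQ \<noteq> {}"
    and bF: "boundary_edges E VQ EQ \<subseteq> F" and FE: "F \<subseteq> E - EQ" and ori: "orientation F A"
    and Pne: "\<forall>x\<in>VQ. P x \<noteq> [] \<and> distinct (P x)"
    and Adef: "A = (\<Union>x\<in>VQ. path_arcs (P x))"
    and c1: "\<forall>v\<in>VQ. (\<exists>!x. x \<in> VQ \<and> hd (P x) = v) \<and> outdeg A v = 1 \<and>
           int (indeg A v) = int (degree E v) - int (degree EQ v) - 1"
    and c2: "\<forall>x\<in>VQ. \<forall>y\<in>inner_vertices (P x).
           outdeg A y = 1 \<and> int (indeg A y) = int (degree E y) - 1"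
    and c3: "\<forall>x\<in>VQ. indeg A (last (P x)) < degree E (last (P x))"
begin

lemma gr: "graph V E" using tr by (simp add: tree_def)
lemma finV: "finite V" using gr by (simp add: graph_def)
lemma edge: "e \<in> E \<Longrightarrow> \<exists>u v. e = {u, v} \<and> u \<noteq> v \<and> u \<in> V \<and> v \<in> V"
  using gr by (simp add: graph_def)
lemma EPow: "E \<subseteq> Pow V"
proof
  fix e assume "e \<in> E"
  then obtain u v where "e = {u, v}" "u \<in> V" "v \<in> V" using edge by metis
  then show "e \<in> Pow V" by simp
qed
lemma finE: "finite E" using EPow finV by (simp add: finite_subset)
lemma UE: "\<Union>E \<subseteq> V"
proof (rule Union_least)
  fix X assume "X \<in> E" then show "X \<subseteq> V" using EPow by auto
qed
lemma EQE: "EQ \<subseteq> E" using sg by (simp add: subgraph_def)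
lemma VQV: "VQ \<subseteq> V" using sg by (simp add: subgraph_def)
lemma finEQ: "finite EQ" using EQE finE by (simp add: finite_subset)
lemma finVQ: "finite VQ" using VQV finV by (simp add: finite_subset)
lemma edgeQ: "e \<in> EQ \<Longrightarrow> \<exists>u v. e = {u, v} \<and> u \<noteq> v \<and> u \<in> VQ \<and> v \<in> VQ"
  using sg by (simp add: subgraph_def graph_def)
lemma UEQ: "\<Union>EQ \<subseteq> VQ"
proof
  fix x assume "x \<in> \<Union>EQ"
  then obtain e where "e \<in> EQ" "x \<in> e" by auto
  then obtain u v where "e = {u, v}" "u \<in> VQ" "v \<in> VQ" using edgeQ by metis
  then show "x \<in> VQ" using \<open>x \<in> e\<close> by auto
qed
lemma acyc: "acyclic_graph E" using tr by (simp add: tree_def)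

lemma arcF: assumes "(u, v) \<in> A" shows "{u, v} \<in> F \<and> (v, u) \<notin> A"
proof -
  have "\<forall>(u, v)\<in>A. {u, v} \<in> F \<and> (v, u) \<notin> A" using ori by (simp add: orientation_def)
  from bspec[OF this assms] show ?thesis by simp
qed

lemma arcE: "(u, v) \<in> A \<Longrightarrow> {u, v} \<in> E \<and> {u, v} \<notin> EQ"
  using arcF FE by (meson Diff_iff subsetD)

lemma arc_ne: assumes "(u, v) \<in> A" shows "u \<noteq> v"
proof
  assume "u = v"
  have "{u, v} \<in> E" using arcE assms by simp
  then obtain p q where "{u, v} = {p, q}" "p \<noteq> q" using edge by metis
  then show False using \<open>u = v\<close> by (simp add: doubleton_eq_iff)
qed

lemma arcV: assumes "(u, v) \<in> A" shows "u \<in> V \<and> v \<in> V"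
proof -
  have "{u, v} \<in> E" using arcE assms by simp
  then have "{u, v} \<subseteq> V" using EPow by auto
  then show ?thesis by simp
qed

lemma finA: "finite A"
proof -
  have "A \<subseteq> V \<times> V" using arcV by auto
  then show ?thesis using finV finite_subset by blast
qed

lemma fin_in: "finite {y. (y, v) \<in> A}"
proof -
  have "{y. (y, v) \<in> A} \<subseteq> fst ` A" by force
  then show ?thesis using finA finite_subset by blast
qed

lemma fin_out: "finite {y. (v, y) \<in> A}"
proof -
  have "{y. (v, y) \<in> A} \<subseteq> snd ` A" by force
  then show ?thesis using finA finite_subset by blast
qed

lemma degQ_pos: "v \<in> VQ \<Longrightarrow> degree EQ v \<noteq> 0"
proof -
  assume v: "v \<in> VQ"
  then obtain e where "e \<in> EQ" "v \<in> e" using ni by (auto simp: no_isolated_def)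
  then have "{e \<in> EQ. v \<in> e} \<noteq> {}" by blast
  moreover have "finite {e \<in> EQ. v \<in> e}" using finEQ by simp
  ultimately show ?thesis by (simp add: degree_def)
qed

lemma notinner: "v \<in> VQ \<Longrightarrow> x \<in> VQ \<Longrightarrow> v \<notin> inner_vertices (P x)"
proof
  assume v: "v \<in> VQ" and x: "x \<in> VQ" and i: "v \<in> inner_vertices (P x)"
  have "int (indeg A v) = int (degree E v) - 1" using c2 x i by blast
  moreover have "int (indeg A v) = int (degree E v) - int (degree EQ v) - 1" using c1 v by blast
  ultimately have "degree EQ v = 0" by linarith
  then show False using degQ_pos v by blast
qed

lemma hd_in: assumes x: "x \<in> VQ" shows "hd (P x) \<in> VQ"
proof -
  define g where "g v = (THE x. x \<in> VQ \<and> hd (P x) = v)" for v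
  have g: "g v \<in> VQ \<and> hd (P (g v)) = v" if "v \<in> VQ" for v
  proof -
    have "\<exists>!x. x \<in> VQ \<and> hd (P x) = v" using c1 that by blast
    then show ?thesis unfolding g_def by (rule theI')
  qed
  have "inj_on g VQ" by (metis g inj_onI)
  moreover have "g ` VQ \<subseteq> VQ" using g by blast
  ultimately have "g ` VQ = VQ" using endo_inj_surj finVQ by blast
  then obtain v where "v \<in> VQ" "x = g v" using x by blast
  then show ?thesis using g by simp
qed

lemma arc_in_path:
  assumes "(b, a) \<in> A"
  obtains y i where "y \<in> VQ" "Suc i < length (P y)" "P y ! i = b" "P y ! Suc i = a"
proof -
  from assms obtain y where y: "y \<in> VQ" "(b, a) \<in> path_arcs (P y)" unfolding Adef by (rule UN_E)
  from y(2) obtain i where "Suc i < length (P y)" "P y ! i = b" "P y ! Suc i = a"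
    unfolding path_arcs_def by auto
  then show ?thesis using that y(1) by metis
qed

lemma path_arc: assumes "y \<in> VQ" "Suc j < length (P y)" shows "(P y ! j, P y ! Suc j) \<in> A"
proof -
  have "(P y ! j, P y ! Suc j) \<in> path_arcs (P y)" unfolding path_arcs_def using assms(2) by auto
  then show ?thesis unfolding Adef using assms(1) by (rule UN_I[rotated])
qed

lemma indeg_lt:
  assumes "(x, z) \<in> A" shows "indeg A z < degree E z"
proof -
  obtain y i where yi: "y \<in> VQ" "Suc i < length (P y)" "P y ! i = x" "P y ! Suc i = z"
    using arc_in_path assms by blast
  show ?thesis
  proof (cases "Suc (Suc i) < length (P y)")
    case True
    then have "z \<in> inner_vertices (P y)" unfolding inner_vertices_def using yi by force
    then have "int (indeg A z) = int (degree E z) - 1" using c2 yi(1) by blast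
    then show ?thesis by linarith
  next
    case False
    then have "length (P y) = Suc (Suc i)" using yi(2) by simp
    moreover have "last (P y) = P y ! (length (P y) - 1)"
      by (rule last_conv_nth) (use yi(2) in auto)
    ultimately have "last (P y) = z" using yi(4) by simp
    then show ?thesis using c3 yi(1) by blast
  qed
qed

lemma out_unique: assumes "v \<in> VQ" shows "\<exists>z. {y. (v, y) \<in> A} = {z}"
proof -
  have "outdeg A v = 1" using c1 assms by blast
  then show ?thesis unfolding outdeg_def by (simp add: card_1_singleton_iff)
qed

lemma reachQ_VQ: assumes "(w, v) \<in> reach EQ" "w \<in> VQ" shows "v \<in> VQ"
proof -
  have "v = w \<or> v \<in> \<Union>EQ" using reach_in[OF assms(1)] .
  then show ?thesis using assms(2) UEQ by (auto simp del: Union_iff)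
qed

lemma side_fin: "finite (side E b a)"
proof -
  have "side E b a \<subseteq> insert b V"
  proof
    fix z assume "z \<in> side E b a"
    then have "(b, z) \<in> reach (E - {{a, b}})" by (simp add: side_def)
    then have "z = b \<or> z \<in> \<Union>(E - {{a, b}})" by (rule reach_in)
    then show "z \<in> insert b V" using UE by blast
  qed
  then show ?thesis using finV finite_subset by blast
qed

end

context goodctx begin

lemma descent_step:
  assumes ba: "(b, a) \<in> A" and aQ: "a \<in> VQ"
  shows "\<exists>w\<in>VQ. (w, b) \<in> reach (E - {{a, b}}) \<and>
     (\<forall>a' b'. (w, a') \<in> reach EQ \<longrightarrow> (b', a') \<in> A \<longrightarrow> (w, b) \<in> reach (E - {{a', b'}}))"
proof -
  obtain y i where yQ: "y \<in> VQ" and len: "Suc i < length (P y)"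
    and pb: "P y ! i = b" and pa: "P y ! Suc i = a"
    using arc_in_path ba by blast
  have dist: "distinct (P y)" using Pne yQ by blast
  have nl: "\<not> Suc (Suc i) < length (P y)"
  proof
    assume "Suc (Suc i) < length (P y)"
    then have "a \<in> inner_vertices (P y)" unfolding inner_vertices_def using pa by force
    then show False using notinner aQ yQ by blast
  qed
  define w where "w = P y ! 0"
  have "P y \<noteq> []" using len by auto
  then have "hd (P y) = w" unfolding w_def by (simp add: hd_conv_nth)
  then have wQ: "w \<in> VQ" using hd_in yQ by metis
  have arcE': "{P y ! j, P y ! Suc j} \<in> E" if "j < i" for j
    using arcE path_arc yQ len that by (meson Suc_lessD less_trans_Suc)
  have avoid_e: "{P y ! j, P y ! Suc j} \<in> E - {{a, b}}" if j: "j < i" for j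
  proof -
    have "{P y ! j, P y ! Suc j} \<noteq> {a, b}"
    proof
      assume "{P y ! j, P y ! Suc j} = {a, b}"
      then have "P y ! j = P y ! i \<or> P y ! j = P y ! Suc i" using pa pb by (auto simp: doubleton_eq_iff)
      moreover have "j < length (P y)" "i < length (P y)" using j len by auto
      ultimately show False using dist len j by (auto simp: nth_eq_iff_index_eq)
    qed
    then show ?thesis using arcE' j by simp
  qed
  have "(P y ! 0, P y ! i) \<in> reach (E - {{a, b}})"
    by (rule path_reach[OF dist]) (use len avoid_e in auto)
  then have wb: "(w, b) \<in> reach (E - {{a, b}})" using w_def pb by simp
  have rest: "(w, b) \<in> reach (E - {{a', b'}})" if wa': "(w, a') \<in> reach EQ" and b'a': "(b', a') \<in> A" for a' b'
  proof -
    have a'Q: "a' \<in> VQ" using reachQ_VQ wa' wQ by blast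
    have "{P y ! j, P y ! Suc j} \<in> E - {{a', b'}}" if j: "j < i" for j
    proof -
      have "{P y ! j, P y ! Suc j} \<noteq> {a', b'}"
      proof
        assume "{P y ! j, P y ! Suc j} = {a', b'}"
        then have "(P y ! j = a' \<and> P y ! Suc j = b') \<or> (P y ! j = b' \<and> P y ! Suc j = a')"
          by (auto simp: doubleton_eq_iff)
        then show False
        proof
          assume h: "P y ! j = a' \<and> P y ! Suc j = b'"
          have "(P y ! j, P y ! Suc j) \<in> A" using path_arc yQ len j by simp
          then show False using h b'a' arcF by auto
        next
          assume h: "P y ! j = b' \<and> P y ! Suc j = a'"
          have "Suc (Suc j) < length (P y)" using j len by simp
          then have "a' \<in> inner_vertices (P y)" unfolding inner_vertices_def using h by force
          then show False using notinner a'Q yQ by blast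
        qed
      qed
      then show ?thesis using arcE' j by simp
    qed
    then have "(P y ! 0, P y ! i) \<in> reach (E - {{a', b'}})"
      by (intro path_reach[OF dist]) (use len in auto)
    then show ?thesis using w_def pb by simp
  qed
  show ?thesis using wQ wb rest by blast
qed

end

context goodctx begin

lemma descent:
  assumes "(b, a) \<in> A" "a \<in> VQ"
  shows "\<exists>w\<in>VQ. \<forall>v. (w, v) \<in> reach EQ \<longrightarrow> (\<forall>y. (y, v) \<notin> A)"
proof -
  have "\<forall>b a. card (side E b a) = n \<longrightarrow> (b, a) \<in> A \<longrightarrow> a \<in> VQ \<longrightarrow>
          (\<exists>w\<in>VQ. \<forall>v. (w, v) \<in> reach EQ \<longrightarrow> (\<forall>y. (y, v) \<notin> A))" for n
  proof (induction n rule: less_induct)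
    case (less n)
    show ?case
    proof (intro allI impI)
      fix b a assume hn: "card (side E b a) = n" and ba: "(b, a) \<in> A" and aQ: "a \<in> VQ"
      from descent_step[OF ba aQ] obtain w where wQ: "w \<in> VQ" and wr: "(w, b) \<in> reach (E - {{a, b}}) \<and>
     (\<forall>a' b'. (w, a') \<in> reach EQ \<longrightarrow> (b', a') \<in> A \<longrightarrow> (w, b) \<in> reach (E - {{a', b'}}))"
        by (rule bexE)
      note wb = conjunct1[OF wr] and rest = conjunct2[OF wr]
      show "\<exists>w\<in>VQ. \<forall>v. (w, v) \<in> reach EQ \<longrightarrow> (\<forall>y. (y, v) \<notin> A)"
      proof (cases "\<forall>v. (w, v) \<in> reach EQ \<longrightarrow> (\<forall>y. (y, v) \<notin> A)")
        case True
        then show ?thesis by (intro bexI[OF _ wQ])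
      next
        case False
        then obtain a' b' where wa': "(w, a') \<in> reach EQ" and b'a': "(b', a') \<in> A" by auto
        have a'Q: "a' \<in> VQ" using reachQ_VQ wa' wQ by blast
        have eE: "{a, b} \<in> E" "{a, b} \<notin> EQ" using arcE[OF ba] by (simp_all add: insert_commute)
        have e'E: "{a', b'} \<in> E" "{a', b'} \<notin> EQ" using arcE[OF b'a'] by (simp_all add: insert_commute)
        have ab: "a \<noteq> b" using arc_ne ba by auto
        have a'b': "a' \<noteq> b'" using arc_ne b'a' by auto
        have EQsub: "EQ \<subseteq> E - {{a, b}}" using EQE eE(2) by auto
        have EQsub': "EQ \<subseteq> E - {{a', b'}}" using EQE e'E(2) by auto
        have nb: "(b, a) \<notin> reach (E - {{a, b}})" using no_bypass[OF acyc eE(1) ab] .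
        have nb': "(b', a') \<notin> reach (E - {{a', b'}})" using no_bypass[OF acyc e'E(1) a'b'] .
        have a'side: "(b, a') \<in> reach (E - {{a, b}})"
          using rtrancl_trans[OF reach_sym[OF wb] reach_mono[OF EQsub wa']] .
        have ee': "{a', b'} \<noteq> {a, b}"
        proof
          assume "{a', b'} = {a, b}"
          then have "(a' = a \<and> b' = b) \<or> (a' = b \<and> b' = a)" by (simp add: doubleton_eq_iff)
          then show False
          proof
            assume "a' = a \<and> b' = b" then show False using a'side nb by simp
          next
            assume "a' = b \<and> b' = a" then show False using ba b'a' arcF by auto
          qed
        qed
        have "(a', b') \<in> {(x, y). adj (E - {{a, b}}) x y}"
          using e'E(1) ee' a'b' by (simp add: adj_def)
        then have b'side: "(b, b') \<in> reach (E - {{a, b}})"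
          by (rule rtrancl_into_rtrancl[OF a'side])
        have wb': "(w, b) \<in> reach (E - {{a', b'}})" using rest wa' b'a' by simp
        have a'b: "(a', b) \<in> reach (E - {{a', b'}})"
          using rtrancl_trans[OF reach_sym[OF reach_mono[OF EQsub' wa']] wb'] .
        have bnot: "(b', b) \<notin> reach (E - {{a', b'}})"
        proof
          assume "(b', b) \<in> reach (E - {{a', b'}})"
          from rtrancl_trans[OF this reach_sym[OF a'b]] show False using nb' by simp
        qed
        have sub: "side E b' a' \<subseteq> side E b a"
        proof
          fix z assume "z \<in> side E b' a'"
          then have zr: "(b', z) \<in> reach (E - {{a', b'}})" by (simp add: side_def)
          have "(b', z) \<in> reach (E - {{a, b}})" using zr
          proof (induction rule: rtrancl_induct)
            case base show ?case by simp
          next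
            case (step p q)
            have pq: "adj (E - {{a', b'}}) p q" using step(2) by simp
            have bq: "(b', q) \<in> reach (E - {{a', b'}})" using step(1) step(2) by (rule rtrancl_into_rtrancl)
            have "{p, q} \<noteq> {a, b}"
            proof
              assume "{p, q} = {a, b}"
              then have "b \<in> {p, q}" by simp
              then have "b = p \<or> b = q" by simp
              then show False using step(1) bq bnot by auto
            qed
            then have "(p, q) \<in> {(x, y). adj (E - {{a, b}}) x y}" using pq by (simp add: adj_def)
            then show ?case by (rule rtrancl_into_rtrancl[OF step(3)])
          qed
          from rtrancl_trans[OF b'side this] show "z \<in> side E b a" by (simp add: side_def)
        qed
        have "a' \<in> side E b a" using a'side by (simp add: side_def)
        moreover have "a' \<notin> side E b' a'" using nb' by (simp add: side_def)
        ultimately have "side E b' a' \<subset> side E b a" using sub by blast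
        then have "card (side E b' a') < n" using hn side_fin psubset_card_mono by metis
        from less(1)[OF this, rule_format, OF refl b'a' a'Q] show ?thesis .
      qed
    qed
  qed
  then show ?thesis using assms by blast
qed

end


lemma adj_mono: "E1 \<subseteq> E2 \<Longrightarrow> adj E1 x y \<Longrightarrow> adj E2 x y"
  unfolding adj_def by blast

lemma acyclic_mono: assumes "E1 \<subseteq> E2" "acyclic_graph E2" shows "acyclic_graph E1"
proof -
  have "is_cycle E2 c" if "is_cycle E1 c" for c
    using that adj_mono[OF assms(1)] unfolding is_cycle_def by blast
  then show ?thesis using assms(2) unfolding acyclic_graph_def by blast
qed

context goodctx begin

lemma comp_good:
  assumes wQ: "w \<in> VQ" and noin: "\<forall>v. (w, v) \<in> reach EQ \<longrightarrow> (\<forall>y. (y, v) \<notin> A)"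
  shows "\<exists>VQ' EQ'. good_subgraph V E VQ' EQ' \<and> tree VQ' EQ'"
proof -
  define C where "C = {v. (w, v) \<in> reach EQ}"
  define EC where "EC = {e \<in> EQ. e \<subseteq> C}"
  have CQ: "C \<subseteq> VQ"
  proof
    fix v assume "v \<in> C"
    then have "(w, v) \<in> reach EQ" by (simp add: C_def)
    then show "v \<in> VQ" using reachQ_VQ wQ by blast
  qed
  have wC: "w \<in> C" by (simp add: C_def)
  have closed: "e \<subseteq> C" if v: "v \<in> C" and e: "e \<in> EQ" and ve: "v \<in> e" for v e
  proof -
    obtain p q where pq: "e = {p, q}" "p \<noteq> q" using edgeQ e by blast
    have "adj EQ p q" "adj EQ q p" using pq e by (auto simp: adj_def insert_commute)
    then have r1: "(p, q) \<in> {(x, y). adj EQ x y}" and r2: "(q, p) \<in> {(x, y). adj EQ x y}" by simp_all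
    have wv: "(w, v) \<in> reach EQ" using v by (simp add: C_def)
    have "v = p \<or> v = q" using ve pq by simp
    then show ?thesis
    proof
      assume "v = p"
      then have "(w, q) \<in> reach EQ" using rtrancl_into_rtrancl[OF wv] r1 by simp
      then show ?thesis using pq \<open>v = p\<close> v by (simp add: C_def)
    next
      assume "v = q"
      then have "(w, p) \<in> reach EQ" using rtrancl_into_rtrancl[OF wv] r2 by simp
      then show ?thesis using pq \<open>v = q\<close> v by (simp add: C_def)
    qed
  qed
  have noinC: "(y, v) \<notin> A" if "v \<in> C" for v y
    using noin that by (simp add: C_def)
  have ECQ: "EC \<subseteq> EQ" by (auto simp: EC_def)
  have degC: "degree EC v = degree EQ v" if "v \<in> C" for v
  proof -
    have "{e \<in> EC. v \<in> e} = {e \<in> EQ. v \<in> e}" using closed[OF that] by (auto simp: EC_def)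
    then show ?thesis by (simp add: degree_def)
  qed
  have ext: "int (degree E v) - int (degree EQ v) - 1 = 0" if "v \<in> C" for v
  proof -
    have "{y. (y, v) \<in> A} = {}" using noinC that by blast
    then have "indeg A v = 0" by (simp add: indeg_def)
    moreover have "int (indeg A v) = int (degree E v) - int (degree EQ v) - 1"
      using c1 CQ that by blast
    ultimately show ?thesis by simp
  qed
  define u where "u x = (THE z. (x, z) \<in> A)" for x
  have u: "(x, u x) \<in> A \<and> (\<forall>z. (x, z) \<in> A \<longrightarrow> z = u x)" if xQ: "x \<in> VQ" for x
  proof -
    obtain z where z: "{y. (x, y) \<in> A} = {z}" using out_unique[OF xQ] by blast
    then have zi: "\<And>y. (x, y) \<in> A \<longleftrightarrow> y = z" by blast
    then have "u x = z" unfolding u_def by simp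
    then show ?thesis using zi by simp
  qed
  define A' where "A' = {(x, u x) | x. x \<in> C}"
  define P' where "P' x = [x, u x]" for x
  define F' where "F' = boundary_edges E C EC"
  have A'_iff: "(p, q) \<in> A' \<longleftrightarrow> p \<in> C \<and> q = u p" for p q by (auto simp: A'_def)
  have A'A: "(p, q) \<in> A' \<Longrightarrow> (p, q) \<in> A" for p q using A'_iff u CQ by auto
  have grC: "graph C EC"
    unfolding graph_def
  proof (intro conjI ballI)
    show "finite C" using CQ finVQ finite_subset by auto
  next
    fix e assume "e \<in> EC"
    then have "e \<in> EQ" "e \<subseteq> C" by (auto simp: EC_def)
    then show "\<exists>u v. e = {u, v} \<and> u \<noteq> v \<and> u \<in> C \<and> v \<in> C" using edgeQ by fastforce
  qed
  have reachEC: "(w, v) \<in> reach EC" if "(w, v) \<in> reach EQ" for v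
    using that
  proof (induction rule: rtrancl_induct)
    case base show ?case by simp
  next
    case (step p q)
    have pC: "p \<in> C" using step(1) by (simp add: C_def)
    have "adj EQ p q" using step(2) by simp
    then have "{p, q} \<in> EQ" "p \<noteq> q" by (auto simp: adj_def)
    then have "{p, q} \<in> EC" using closed[OF pC] by (auto simp: EC_def)
    then have "(p, q) \<in> {(x, y). adj EC x y}" using \<open>p \<noteq> q\<close> by (simp add: adj_def)
    then show ?case by (rule rtrancl_into_rtrancl[OF step(3)])
  qed
  have treeC: "tree C EC"
    unfolding tree_def
  proof (intro conjI)
    show "graph C EC" by (rule grC)
    show "C \<noteq> {}" using wC by blast
    show "connected_graph C EC" unfolding connected_graph_def
    proof (intro ballI)
      fix p q assume "p \<in> C" "q \<in> C"
      then have "(w, p) \<in> reach EC" "(w, q) \<in> reach EC" using reachEC by (simp_all add: C_def)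
      then show "(p, q) \<in> reach EC" using reach_sym rtrancl_trans by metis
    qed
    show "acyclic_graph EC" using acyclic_mono[OF _ acyc] ECQ EQE by blast
  qed
  have niC: "no_isolated C EC" unfolding no_isolated_def
  proof
    fix v assume v: "v \<in> C"
    then obtain e where "e \<in> EQ" "v \<in> e" using ni CQ by (auto simp: no_isolated_def)
    then show "\<exists>e\<in>EC. v \<in> e" using closed[OF v] by (auto simp: EC_def)
  qed
  have ECne: "EC \<noteq> {}" using niC wC by (auto simp: no_isolated_def)
  have ori': "orientation F' A'" unfolding orientation_def
  proof (intro conjI ballI)
    fix pq assume "pq \<in> A'"
    then obtain p where p: "p \<in> C" "pq = (p, u p)" by (auto simp: A'_def)
    have pA: "(p, u p) \<in> A" using u CQ p by auto
    have "{p, u p} \<in> E" "{p, u p} \<notin> EQ" using arcE[OF pA] by auto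
    then have "{p, u p} \<in> F'" using p by (auto simp: F'_def boundary_edges_def EC_def)
    moreover have "(u p, p) \<notin> A'" using A'A arcF pA by blast
    ultimately show "case pq of (p, q) \<Rightarrow> {p, q} \<in> F' \<and> (q, p) \<notin> A'" using p by simp
  next
    fix e assume "e \<in> F'"
    then have e: "e \<in> E" "e \<notin> EC" "e \<inter> C \<noteq> {}" by (auto simp: F'_def boundary_edges_def)
    then obtain v where v: "v \<in> e" "v \<in> C" by blast
    have "e \<notin> EQ" using closed[OF v(2) _ v(1)] e(2) by (auto simp: EC_def)
    then have "e \<in> boundary_edges E VQ EQ" using e v CQ by (auto simp: boundary_edges_def)
    then have "e \<in> F" using bF by blast
    then obtain p q where pq: "(p, q) \<in> A" "e = {p, q}" using ori unfolding orientation_def by blast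
    have "q \<noteq> v" using noinC[OF v(2)] pq(1) by blast
    then have "p = v" using v(1) pq(2) by auto
    then have "q = u v" using u CQ v(2) pq(1) by blast
    then have "(v, u v) \<in> A'" "e = {v, u v}" using v(2) pq(2) \<open>p = v\<close> by (auto simp: A'_def)
    then show "\<exists>x\<in>A'. case x of (p, q) \<Rightarrow> e = {p, q}" by blast
  qed
  have good: "good_subgraph V E C EC"
    unfolding good_subgraph_def
  proof (intro conjI exI)
    show "subgraph C EC V E" using grC CQ VQV ECQ EQE by (auto simp: subgraph_def)
    show "no_isolated C EC" by (rule niC)
    show "EC \<noteq> {}" by (rule ECne)
    show "boundary_edges E C EC \<subseteq> F'" by (simp add: F'_def)
    show "F' \<subseteq> E - EC" by (auto simp: F'_def boundary_edges_def)
    show "orientation F' A'" by (rule ori')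
    show "\<forall>x\<in>C. P' x \<noteq> [] \<and> distinct (P' x)"
      using u CQ arc_ne by (auto simp: P'_def)
    show "A' = (\<Union>x\<in>C. path_arcs (P' x))"
      by (auto simp: P'_def path_arcs_two A'_def)
    show "\<forall>x\<in>C. \<forall>y\<in>C. x \<noteq> y \<longrightarrow> path_arcs (P' x) \<inter> path_arcs (P' y) = {}"
      by (auto simp: P'_def path_arcs_two)
    show "\<forall>v\<in>C. (\<exists>!x. x \<in> C \<and> hd (P' x) = v) \<and> outdeg A' v = 1 \<and>
           int (indeg A' v) = int (degree E v) - int (degree EC v) - 1"
    proof
      fix v assume v: "v \<in> C"
      have "\<exists>!x. x \<in> C \<and> hd (P' x) = v" using v by (auto simp: P'_def)
      moreover have "{z. (v, z) \<in> A'} = {u v}" using v A'_iff by auto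
      then have "outdeg A' v = 1" by (simp add: outdeg_def)
      moreover have "{y. (y, v) \<in> A'} = {}" using A'A noinC[OF v] by blast
      then have "indeg A' v = 0" by (simp add: indeg_def)
      ultimately show "(\<exists>!x. x \<in> C \<and> hd (P' x) = v) \<and> outdeg A' v = 1 \<and>
           int (indeg A' v) = int (degree E v) - int (degree EC v) - 1"
        using ext[OF v] degC[OF v] by simp
    qed
    show "\<forall>x\<in>C. \<forall>y\<in>inner_vertices (P' x). outdeg A' y = 1 \<and> int (indeg A' y) = int (degree E y) - 1"
      by (simp add: P'_def inner_two)
    show "\<forall>x\<in>C. indeg A' (last (P' x)) < degree E (last (P' x))"
    proof
      fix x assume x: "x \<in> C"
      have xA: "(x, u x) \<in> A" using u CQ x by auto
      have "{y. (y, u x) \<in> A'} \<subseteq> {y. (y, u x) \<in> A}" using A'A by blast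
      then have "indeg A' (u x) \<le> indeg A (u x)" unfolding indeg_def using fin_in by (rule card_mono[rotated])
      also have "\<dots> < degree E (u x)" using indeg_lt xA by blast
      finally show "indeg A' (last (P' x)) < degree E (last (P' x))" by (simp add: P'_def)
    qed
  qed
  show ?thesis using good treeC by blast
qed

lemma main: "\<exists>VQ' EQ'. good_subgraph V E VQ' EQ' \<and> tree VQ' EQ'"
proof (cases "\<exists>b a. (b, a) \<in> A \<and> a \<in> VQ")
  case True
  then obtain b a where "(b, a) \<in> A" "a \<in> VQ" by blast
  from descent[OF this] obtain w where "w \<in> VQ" "\<forall>v. (w, v) \<in> reach EQ \<longrightarrow> (\<forall>y. (y, v) \<notin> A)"
    by (rule bexE)
  then show ?thesis by (rule comp_good)
next
  case False
  obtain e where "e \<in> EQ" using ne by blast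
  then obtain w where wQ: "w \<in> VQ" using edgeQ by blast
  have "\<forall>v. (w, v) \<in> reach EQ \<longrightarrow> (\<forall>y. (y, v) \<notin> A)"
  proof (intro allI impI)
    fix v y assume "(w, v) \<in> reach EQ"
    then have "v \<in> VQ" using reachQ_VQ wQ by blast
    then show "(y, v) \<notin> A" using False by blast
  qed
  with wQ show ?thesis by (rule comp_good)
qed

end

lemma good_tree:
  assumes tr: "tree V E" and g: "good_subgraph V E VQ EQ"
  shows "\<exists>VQ' EQ'. good_subgraph V E VQ' EQ' \<and> tree VQ' EQ'"
proof -
  have h: "subgraph VQ EQ V E" "no_isolated VQ EQ" "EQ \<noteq> {}"
    using g unfolding good_subgraph_def by simp_all
  from g have "\<exists>F A P.
        boundary_edges E VQ EQ \<subseteq> F \<and> F \<subseteq> E - EQ \<and>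
        orientation F A \<and>
        (\<forall>x\<in>VQ. P x \<noteq> [] \<and> distinct (P x)) \<and>
        A = (\<Union>x\<in>VQ. path_arcs (P x)) \<and>
        (\<forall>x\<in>VQ. \<forall>y\<in>VQ. x \<noteq> y \<longrightarrow> path_arcs (P x) \<inter> path_arcs (P y) = {}) \<and>
        (\<forall>v\<in>VQ. (\<exists>!x. x \<in> VQ \<and> hd (P x) = v) \<and> outdeg A v = 1 \<and>
           int (indeg A v) = int (degree E v) - int (degree EQ v) - 1) \<and>
        (\<forall>x\<in>VQ. \<forall>y\<in>inner_vertices (P x).
           outdeg A y = 1 \<and> int (indeg A y) = int (degree E y) - 1) \<and>
        (\<forall>x\<in>VQ. indeg A (last (P x)) < degree E (last (P x)))"
    unfolding good_subgraph_def by (elim conjE)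
  then show ?thesis
  apply (elim conjE exE)
  apply (rule goodctx.main)
  apply (unfold goodctx_def)
  apply (intro conjI)
  apply (assumption | rule tr h)+
  done
qed

theorem proposition7p2:
  fixes V :: "'a set" and E :: "'a set set"
  assumes "tree V E"
  shows "(\<exists>VQ EQ. good_subgraph V E VQ EQ) \<longleftrightarrow>
         (\<exists>VQ EQ. good_subgraph V E VQ EQ \<and> tree VQ EQ)"
  using good_tree[OF assms] by blast


end
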